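(* Every $2$-dimensional real Banach space has the $\mathbf{L}_{p,p}$-nu.
   Context: For a Banach space $X$: $\Pi(X)=\{(x,x^* )\in S_X\times S_{X^*}: x^*(x)=1\}$; for $T\in\mathcal{L}(X)$ (bounded linear operators on $X$), $v(T)=\sup\{|x^*(Tx)|:(x,x^* )\in\Pi(X)\}$. $X$ has the $\mathbf{L}_{p,p}$-nu if for every $\varepsilon>0$ and $(x,x^* )\in\Pi(X)$ there is $\eta(\varepsilon,(x,x^* ))>0$ such that whenever $T\in\mathcal{L}(X)$ with $v(T)=1$ satisfies $|x^*(Tx)|>1-\eta(\varepsilon,(x,x^* ))$, there is $S\in\mathcal{L}(X)$ with $v(S)=1$, $|x^*(Sx)|=1$ and $\|S-T\|<\varepsilon$. *)

theory Defs
  imports "HOL-Analysis.Analysis"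
begin

definition state_pairs :: "('a::real_normed_vector \<times> ('a \<Rightarrow>\<^sub>L real)) set" where
  "state_pairs = {(x, f). norm x = 1 \<and> norm f = 1 \<and> blinfun_apply f x = 1}"

definition numrad :: "('a::real_normed_vector \<Rightarrow>\<^sub>L 'a) \<Rightarrow> real" where
  "numrad T = (SUP p \<in> state_pairs. \<bar>blinfun_apply (snd p) (blinfun_apply T (fst p))\<bar>)"

definition Lpp_nu :: "'a::real_normed_vector itself \<Rightarrow> bool" where
  "Lpp_nu _ \<longleftrightarrow>
    (\<forall>\<epsilon>>0. \<forall>x f. (x, f) \<in> (state_pairs :: ('a \<times> ('a \<Rightarrow>\<^sub>L real)) set) \<longrightarrow>
      (\<exists>\<eta>>0. \<forall>T :: 'a \<Rightarrow>\<^sub>L 'a.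
         numrad T = 1 \<and> \<bar>blinfun_apply f (blinfun_apply T x)\<bar> > 1 - \<eta> \<longrightarrow>
         (\<exists>S :: 'a \<Rightarrow>\<^sub>L 'a. numrad S = 1 \<and> \<bar>blinfun_apply f (blinfun_apply S x)\<bar> = 1
              \<and> norm (S - T) < \<epsilon>)))"

end

theory Submission imports Defs begin

lemma sp_bound:
  fixes T :: "'a::real_normed_vector \<Rightarrow>\<^sub>L 'a"
  assumes "p \<in> state_pairs"
  shows "\<bar>blinfun_apply (snd p) (blinfun_apply T (fst p))\<bar> \<le> norm T"
proof -
  obtain x f where p: "p = (x,f)" "norm x = 1" "norm f = 1" "blinfun_apply f x = 1"
    using assms unfolding state_pairs_def by auto
  have "\<bar>blinfun_apply f (blinfun_apply T x)\<bar> \<le> norm f * norm (blinfun_apply T x)"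
    using norm_blinfun[of f] by (simp add: real_norm_def)
  also have "\<dots> \<le> norm T" using norm_blinfun[of T x] p by simp
  finally show ?thesis using p by simp
qed

lemma sp_bdd:
  "bdd_above ((\<lambda>p. \<bar>blinfun_apply (snd p) (blinfun_apply (T::'a::real_normed_vector \<Rightarrow>\<^sub>L 'a) (fst p))\<bar>) ` state_pairs)"
  by (rule bdd_aboveI2[where M="norm T"]) (rule sp_bound)

lemma nr_upper:
  fixes T :: "'a::real_normed_vector \<Rightarrow>\<^sub>L 'a"
  assumes "(x, f) \<in> state_pairs"
  shows "\<bar>blinfun_apply f (blinfun_apply T x)\<bar> \<le> numrad T"
  unfolding numrad_def using cSUP_upper[OF assms sp_bdd[of T]] by simp

lemma nr_le_norm:
  fixes T :: "'a::real_normed_vector \<Rightarrow>\<^sub>L 'a"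
  assumes "(state_pairs :: ('a \<times> ('a \<Rightarrow>\<^sub>L real)) set) \<noteq> {}"
  shows "numrad T \<le> norm T"
  unfolding numrad_def by (rule cSUP_least[OF assms]) (rule sp_bound)

lemma nr_add:
  fixes A B :: "'a::real_normed_vector \<Rightarrow>\<^sub>L 'a"
  assumes "(state_pairs :: ('a \<times> ('a \<Rightarrow>\<^sub>L real)) set) \<noteq> {}"
  shows "numrad (A + B) \<le> numrad A + numrad B"
  unfolding numrad_def[of "A+B"]
proof (rule cSUP_least[OF assms])
  fix p :: "'a \<times> ('a \<Rightarrow>\<^sub>L real)" assume p: "p \<in> state_pairs"
  obtain x f where pp: "p = (x,f)" by (cases p)
  have "\<bar>blinfun_apply f (blinfun_apply (A+B) x)\<bar> \<le> \<bar>blinfun_apply f (blinfun_apply A x)\<bar> + \<bar>blinfun_apply f (blinfun_apply B x)\<bar>"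
    by (simp add: blinfun.add_left blinfun.add_right)
  also have "\<dots> \<le> numrad A + numrad B"
    using nr_upper[of x f A] nr_upper[of x f B] p pp by simp
  finally show "\<bar>blinfun_apply (snd p) (blinfun_apply (A+B) (fst p))\<bar> \<le> numrad A + numrad B" using pp by simp
qed

lemma nr_scale_le:
  fixes A :: "'a::real_normed_vector \<Rightarrow>\<^sub>L 'a"
  assumes "(state_pairs :: ('a \<times> ('a \<Rightarrow>\<^sub>L real)) set) \<noteq> {}"
  shows "numrad (t *\<^sub>R A) \<le> \<bar>t\<bar> * numrad A"
  unfolding numrad_def[of "t *\<^sub>R A"]
proof (rule cSUP_least[OF assms])
  fix p :: "'a \<times> ('a \<Rightarrow>\<^sub>L real)" assume p: "p \<in> state_pairs"
  obtain x f where pp: "p = (x,f)" by (cases p)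
  have "\<bar>blinfun_apply f (blinfun_apply (t *\<^sub>R A) x)\<bar> = \<bar>t\<bar> * \<bar>blinfun_apply f (blinfun_apply A x)\<bar>"
    by (simp add: blinfun.scaleR_left blinfun.scaleR_right abs_mult)
  also have "\<dots> \<le> \<bar>t\<bar> * numrad A"
    using nr_upper[of x f A] p pp by (simp add: mult_left_mono)
  finally show "\<bar>blinfun_apply (snd p) (blinfun_apply (t *\<^sub>R A) (fst p))\<bar> \<le> \<bar>t\<bar> * numrad A" using pp by simp
qed

lemma nr_nonneg:
  fixes A :: "'a::real_normed_vector \<Rightarrow>\<^sub>L 'a"
  assumes "(state_pairs :: ('a \<times> ('a \<Rightarrow>\<^sub>L real)) set) \<noteq> {}"
  shows "0 \<le> numrad A"
proof -
  obtain x f where "(x,f) \<in> (state_pairs :: ('a \<times> ('a \<Rightarrow>\<^sub>L real)) set)" using assms by auto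
  from nr_upper[OF this, of A] show ?thesis by linarith
qed

lemma nr_scale:
  fixes A :: "'a::real_normed_vector \<Rightarrow>\<^sub>L 'a"
  assumes ne: "(state_pairs :: ('a \<times> ('a \<Rightarrow>\<^sub>L real)) set) \<noteq> {}"
  shows "numrad (t *\<^sub>R A) = \<bar>t\<bar> * numrad A"
proof (cases "t = 0")
  case True
  then show ?thesis using nr_scale_le[OF ne, of t A] nr_nonneg[OF ne, of "t *\<^sub>R A"] by simp
next
  case False
  have "numrad A = numrad (inverse t *\<^sub>R (t *\<^sub>R A))" using False by simp
  also have "\<dots> \<le> \<bar>inverse t\<bar> * numrad (t *\<^sub>R A)" by (rule nr_scale_le[OF ne])
  finally have "\<bar>t\<bar> * numrad A \<le> numrad (t *\<^sub>R A)" using False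
    by (simp add: abs_inverse field_simps)
  then show ?thesis using nr_scale_le[OF ne, of t A] by linarith
qed

lemma nr_lip:
  fixes A B :: "'a::real_normed_vector \<Rightarrow>\<^sub>L 'a"
  assumes ne: "(state_pairs :: ('a \<times> ('a \<Rightarrow>\<^sub>L real)) set) \<noteq> {}"
  shows "\<bar>numrad A - numrad B\<bar> \<le> numrad (A - B)"
proof -
  have "numrad A \<le> numrad (A - B) + numrad B" using nr_add[OF ne, of "A - B" B] by simp
  moreover have "numrad B \<le> numrad (B - A) + numrad A" using nr_add[OF ne, of "B - A" A] by simp
  moreover have "numrad (B - A) = numrad (A - B)"
    using nr_scale[OF ne, of "-1" "A - B"] by simp
  ultimately show ?thesis by linarith
qed


lemma cone_lb:
  fixes w :: "'e::euclidean_space \<Rightarrow> real" and K :: "'e set"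
  assumes clK: "closed K" and cw: "continuous_on UNIV w"
    and hom: "\<And>t z. w (t *\<^sub>R z) = \<bar>t\<bar> * w z"
    and cone: "\<And>t z. z \<in> K \<Longrightarrow> t *\<^sub>R z \<in> K"
    and pos: "\<And>z. z \<in> K \<Longrightarrow> z \<noteq> 0 \<Longrightarrow> w z > 0"
  shows "\<exists>c>0. \<forall>z\<in>K. c * norm z \<le> w z"
proof -
  have w0: "w 0 = 0" using hom[of 0 0] by simp
  define S where "S = sphere (0::'e) 1 \<inter> K"
  have cS: "compact S" unfolding S_def by (rule compact_Int_closed[OF compact_sphere clK])
  have unit: "inverse (norm z) *\<^sub>R z \<in> S" if "z \<in> K" "z \<noteq> 0" for z
    using that cone[of z] by (simp add: S_def)
  have scal: "w z = norm z * w (inverse (norm z) *\<^sub>R z)" if "z \<noteq> 0" for z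
    using that hom[of "inverse (norm z)" z] by simp
  show ?thesis
  proof (cases "S = {}")
    case True
    then have "z = 0" if "z \<in> K" for z using unit that by blast
    then have "\<forall>z\<in>K. 1 * norm z \<le> w z" using w0 by (metis mult_1 norm_zero order_refl)
    then show ?thesis by (intro exI[of _ 1]) auto
  next
    case False
    obtain u where u: "u \<in> S" "\<And>y. y \<in> S \<Longrightarrow> w u \<le> w y"
      using continuous_attains_inf[OF cS False continuous_on_subset[OF cw]] by blast
    have "u \<in> K" "u \<noteq> 0" using u(1) by (auto simp: S_def)
    then have "w u > 0" using pos by blast
    moreover have "w u * norm z \<le> w z" if "z \<in> K" for z
    proof (cases "z = 0")
      case True then show ?thesis using w0 by simp
    next
      case False
      have "w u \<le> w (inverse (norm z) *\<^sub>R z)" using u(2) unit[OF that False] by blast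
      then have "norm z * w u \<le> norm z * w (inverse (norm z) *\<^sub>R z)" by (simp add: mult_left_mono)
      then show ?thesis using scal[OF False] by (simp add: mult.commute)
    qed
    ultimately show ?thesis by blast
  qed
qed


lemma core:
  fixes \<Phi> :: "'e::euclidean_space \<Rightarrow> ('a::real_normed_vector \<Rightarrow>\<^sub>L 'a)"
    and f :: "'a \<Rightarrow>\<^sub>L real"
  assumes bl: "bounded_linear \<Phi>" and su: "surj \<Phi>" and xf: "(x, f) \<in> state_pairs"
    and ep: "\<epsilon> > 0"
  shows "\<exists>\<eta>>0. \<forall>T :: 'a \<Rightarrow>\<^sub>L 'a.
         numrad T = 1 \<and> \<bar>blinfun_apply f (blinfun_apply T x)\<bar> > 1 - \<eta> \<longrightarrow>
         (\<exists>S :: 'a \<Rightarrow>\<^sub>L 'a. numrad S = 1 \<and> \<bar>blinfun_apply f (blinfun_apply S x)\<bar> = 1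
              \<and> norm (S - T) < \<epsilon>)"
proof (rule ccontr)
  assume contra: "\<not> ?thesis"
  have ne: "(state_pairs :: ('a \<times> ('a \<Rightarrow>\<^sub>L real)) set) \<noteq> {}" using xf by blast
  interpret L: bounded_linear \<Phi> by (rule bl)
  define w where "w m = numrad (\<Phi> m)" for m
  define Z where "Z = {m. w m = 0}"
  obtain K0 where K0: "K0 \<ge> 0" "\<And>m. norm (\<Phi> m) \<le> norm m * K0"
    using L.nonneg_bounded by blast
  have wnn: "w m \<ge> 0" for m unfolding w_def by (rule nr_nonneg[OF ne])
  have whom: "w (t *\<^sub>R z) = \<bar>t\<bar> * w z" for t z
    unfolding w_def L.scaleR by (rule nr_scale[OF ne])
  have wadd: "w (a + b) \<le> w a + w b" for a b
    unfolding w_def L.add by (rule nr_add[OF ne])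
  have wlip: "\<bar>w a - w b\<bar> \<le> w (a - b)" for a b
    unfolding w_def L.diff by (rule nr_lip[OF ne])
  have wle: "w m \<le> norm (\<Phi> m)" for m unfolding w_def by (rule nr_le_norm[OF ne])
  have cw: "continuous_on UNIV w"
  proof (rule lipschitz_on_continuous_on)
    show "K0-lipschitz_on UNIV w"
    proof (rule lipschitz_onI)
      fix a b :: 'e
      have "dist (w a) (w b) \<le> w (a - b)" using wlip[of a b] by (simp add: dist_real_def)
      also have "\<dots> \<le> norm (a - b) * K0" using wle[of "a-b"] K0(2)[of "a-b"] by linarith
      finally show "dist (w a) (w b) \<le> K0 * dist a b" by (simp add: dist_norm mult.commute)
    qed (rule K0(1))
  qed
  have fZ: "blinfun_apply f (blinfun_apply (\<Phi> y) x) = 0" if "y \<in> Z" for y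
    using nr_upper[OF xf, of "\<Phi> y"] that by (simp add: Z_def w_def)
  have w0: "w 0 = 0" using whom[of 0 0] by simp
  have subZ: "subspace Z"
    unfolding subspace_def Z_def
  proof (intro conjI allI impI ballI)
    show "0 \<in> {m. w m = 0}" using w0 by simp
    fix a b assume "a \<in> {m. w m = 0}" "b \<in> {m. w m = 0}"
    then show "a + b \<in> {m. w m = 0}" using wadd[of a b] wnn[of "a+b"] by simp
  next
    fix c a assume "a \<in> {m. w m = 0}"
    then show "c *\<^sub>R a \<in> {m. w m = 0}" using whom[of c a] by simp
  qed
  have spanZ: "span Z = Z" using subZ span_eq_iff by blast
  define Kp where "Kp = {z. \<forall>y\<in>Z. orthogonal z y}"
  have clKp: "closed Kp"
  proof -
    have "Kp = (\<Inter>y\<in>Z. {z. y \<bullet> z = 0})"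
      unfolding Kp_def orthogonal_def by (auto simp: inner_commute)
    then show ?thesis by (auto intro!: closed_INT closed_hyperplane)
  qed
  have coneKp: "t *\<^sub>R z \<in> Kp" if "z \<in> Kp" for t z
    using that unfolding Kp_def by (simp add: orthogonal_clauses)
  have posKp: "w z > 0" if "z \<in> Kp" "z \<noteq> 0" for z
  proof (rule ccontr)
    assume "\<not> w z > 0"
    then have "z \<in> Z" using wnn[of z] by (simp add: Z_def)
    then have "orthogonal z z" using that(1) by (simp add: Kp_def)
    then show False using that(2) by (simp add: orthogonal_def)
  qed
  obtain c where c: "c > 0" "\<And>z. z \<in> Kp \<Longrightarrow> c * norm z \<le> w z"
    using cone_lb[OF clKp cw whom coneKp posKp] by blast
  from contra have "\<forall>n. \<exists>T :: 'a \<Rightarrow>\<^sub>L 'a. numrad T = 1 \<and>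
       \<bar>blinfun_apply f (blinfun_apply T x)\<bar> > 1 - inverse (real (Suc n)) \<and>
       (\<forall>S. numrad S = 1 \<and> \<bar>blinfun_apply f (blinfun_apply S x)\<bar> = 1 \<longrightarrow> \<not> norm (S - T) < \<epsilon>)"
    by (metis inverse_positive_iff_positive of_nat_0_less_iff zero_less_Suc)
  then obtain T where T: "\<And>n. numrad (T n) = 1"
     "\<And>n. \<bar>blinfun_apply f (blinfun_apply (T n) x)\<bar> > 1 - inverse (real (Suc n))"
     "\<And>n S. numrad S = 1 \<Longrightarrow> \<bar>blinfun_apply f (blinfun_apply S x)\<bar> = 1 \<Longrightarrow> \<not> norm (S - T n) < \<epsilon>"
    by metis
  have "\<forall>n. \<exists>y p. y \<in> Z \<and> p \<in> Kp \<and> T n = \<Phi> y + \<Phi> p"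
  proof
    fix n
    obtain m where m: "T n = \<Phi> m" using su by (metis surj_f_inv_f)
    obtain y p where "y \<in> span Z" "\<And>v. v \<in> span Z \<Longrightarrow> orthogonal p v" "m = y + p"
      using orthogonal_subspace_decomp_exists by blast
    then show "\<exists>y p. y \<in> Z \<and> p \<in> Kp \<and> T n = \<Phi> y + \<Phi> p"
      using m spanZ by (auto simp: Kp_def L.add)
  qed
  then obtain y p where yp: "\<And>n. y n \<in> Z" "\<And>n. p n \<in> Kp" "\<And>n. T n = \<Phi> (y n) + \<Phi> (p n)"
    by metis
  have wp: "w (p n) = 1" for n
  proof -
    have "\<bar>w (y n + p n) - w (p n)\<bar> \<le> w (y n)" using wlip[of "y n + p n" "p n"] by simp
    moreover have "w (y n + p n) = 1" using T(1)[of n] yp(3)[of n] by (simp add: w_def L.add)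
    ultimately show ?thesis using yp(1)[of n] by (simp add: Z_def)
  qed
  have fp: "blinfun_apply f (blinfun_apply (T n) x) = blinfun_apply f (blinfun_apply (\<Phi> (p n)) x)" for n
    using yp(3)[of n] fZ[OF yp(1)[of n]] by (simp add: blinfun.add_left blinfun.add_right)
  have pb: "p n \<in> cball 0 (1 / c)" for n
    using c(2)[OF yp(2)[of n]] wp[of n] c(1) by (simp add: field_simps)
  obtain l r where lr: "strict_mono r" "(p \<circ> r) \<longlonglongrightarrow> l"
    using seq_compactE[OF compact_imp_seq_compact[OF compact_cball] ] pb by metis
  have pr: "(\<lambda>n. p (r n)) \<longlonglongrightarrow> l" using lr(2) by (simp add: o_def)
  have Phr: "(\<lambda>n. \<Phi> (p (r n))) \<longlonglongrightarrow> \<Phi> l" by (rule L.tendsto[OF pr])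
  have "(\<lambda>n. w (p (r n))) \<longlonglongrightarrow> w l"
    by (rule continuous_on_tendsto_compose[OF cw pr]) auto
  then have wl: "w l = 1" using wp by (simp add: LIMSEQ_const_iff)
  have gl: "(\<lambda>n. \<bar>blinfun_apply f (blinfun_apply (\<Phi> (p (r n))) x)\<bar> + inverse (real (Suc (r n))))
      \<longlonglongrightarrow> \<bar>blinfun_apply f (blinfun_apply (\<Phi> l) x)\<bar> + 0"
  proof (intro tendsto_add tendsto_rabs blinfun.tendsto tendsto_const Phr)
    show "(\<lambda>n. inverse (real (Suc (r n)))) \<longlonglongrightarrow> 0"
      using LIMSEQ_subseq_LIMSEQ[OF LIMSEQ_inverse_real_of_nat lr(1)] by (simp add: o_def)
  qed
  have "1 \<le> \<bar>blinfun_apply f (blinfun_apply (\<Phi> l) x)\<bar> + 0"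
  proof (rule LIMSEQ_le_const[OF gl], intro exI allI impI)
    fix n
    show "1 \<le> \<bar>blinfun_apply f (blinfun_apply (\<Phi> (p (r n))) x)\<bar> + inverse (real (Suc (r n)))"
      using T(2)[of "r n"] fp[of "r n"] by simp
  qed
  moreover have "\<bar>blinfun_apply f (blinfun_apply (\<Phi> l) x)\<bar> \<le> 1"
    using nr_upper[OF xf, of "\<Phi> l"] wl by (simp add: w_def)
  ultimately have fl: "\<bar>blinfun_apply f (blinfun_apply (\<Phi> l) x)\<bar> = 1" by simp
  have "(\<lambda>n. norm (\<Phi> l - \<Phi> (p (r n)))) \<longlonglongrightarrow> norm (\<Phi> l - \<Phi> l)"
    by (intro tendsto_norm tendsto_diff tendsto_const Phr)
  then have "eventually (\<lambda>n. norm (\<Phi> l - \<Phi> (p (r n))) < \<epsilon>) sequentially"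
    using ep by (intro order_tendstoD(2)) auto
  then obtain N where N: "norm (\<Phi> l - \<Phi> (p (r N))) < \<epsilon>"
    using eventually_sequentially by auto
  define S where "S = \<Phi> l + \<Phi> (y (r N))"
  have "numrad S = 1"
  proof -
    have "\<bar>w (l + y (r N)) - w l\<bar> \<le> w (y (r N))" using wlip[of "l + y (r N)" l] by simp
    then have "w (l + y (r N)) = 1" using wl yp(1)[of "r N"] by (simp add: Z_def)
    then show ?thesis by (simp add: S_def w_def L.add)
  qed
  moreover have "\<bar>blinfun_apply f (blinfun_apply S x)\<bar> = 1"
    using fl fZ[OF yp(1)[of "r N"]] by (simp add: S_def blinfun.add_left blinfun.add_right)
  moreover have "norm (S - T (r N)) < \<epsilon>"
    using N yp(3)[of "r N"] by (simp add: S_def)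
  ultimately show False using T(3) by blast
qed


definition rk :: "('a::real_normed_vector \<Rightarrow>\<^sub>L real) \<Rightarrow> 'a \<Rightarrow> ('a \<Rightarrow>\<^sub>L 'a)" where
  "rk C b = Blinfun (\<lambda>x. blinfun_apply C x *\<^sub>R b)"

lemma rk_apply: "blinfun_apply (rk C b) x = blinfun_apply C x *\<^sub>R b"
proof -
  have "bounded_linear (\<lambda>x. blinfun_apply C x *\<^sub>R b)"
    by (rule bounded_linear_compose[OF bounded_linear_scaleR_left blinfun.bounded_linear_right])
  then show ?thesis unfolding rk_def by (simp add: bounded_linear_Blinfun_apply)
qed

lemma coords2:
  assumes "dim (UNIV :: 'a set) = 2"
  obtains b1 b2 :: "'a::real_normed_vector" and C1 C2 :: "'a \<Rightarrow>\<^sub>L real"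
  where "\<And>x. x = blinfun_apply C1 x *\<^sub>R b1 + blinfun_apply C2 x *\<^sub>R b2"
proof -
  obtain B :: "'a set" where B: "independent B" "UNIV \<subseteq> span B" "card B = 2"
    using basis_exists[of "UNIV :: 'a set"] assms by metis
  then obtain b1 b2 where bb: "B = {b1, b2}" "b1 \<noteq> b2" by (auto simp: card_2_iff)
  define L where "L v = fst v *\<^sub>R b1 + snd v *\<^sub>R b2" for v :: "real \<times> real"
  have linL: "linear L" unfolding L_def by (intro linearI) (auto simp: algebra_simps)
  have blL: "bounded_linear L" using linL linear_conv_bounded_linear by blast
  have inj0: "v = 0" if "L v = 0" for v
  proof (rule ccontr)
    assume "v \<noteq> 0"
    define u where "u z = (if z = b1 then fst v else snd v)" for z
    have "(\<Sum>z\<in>B. u z *\<^sub>R z) = 0" using that bb by (simp add: u_def L_def)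
    moreover have "\<exists>z\<in>B. u z \<noteq> 0" using \<open>v \<noteq> 0\<close> bb by (cases v) (auto simp: u_def zero_prod_def)
    ultimately have "dependent B" using dependent_finite[of B] bb by auto
    then show False using B(1) by simp
  qed
  have injL: "inj L"
  proof (rule injI)
    fix a b assume "L a = L b"
    then have "L (a - b) = 0" using linear_diff[OF linL] by simp
    then show "a = b" using inj0[of "a - b"] by simp
  qed
  have surjL: "surj L"
  proof -
    have "x \<in> range L" for x
    proof -
      have "x \<in> span {b1, b2}" using B(2) bb by auto
      then obtain k where "x - k *\<^sub>R b1 \<in> span {b2}" by (auto simp: span_insert)
      then obtain k2 where "x - k *\<^sub>R b1 = k2 *\<^sub>R b2" by (auto simp: span_singleton)
      then have "x = L (k, k2)" by (simp add: L_def algebra_simps)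
      then show ?thesis by blast
    qed
    then show ?thesis by blast
  qed
  obtain k where k: "k > 0" "\<And>v. k * norm v \<le> norm (L v)"
  proof -
    have "\<exists>c>0. \<forall>z\<in>UNIV. c * norm z \<le> (\<lambda>v. norm (L v)) z"
    proof (rule cone_lb)
      show "continuous_on UNIV (\<lambda>v. norm (L v))"
        by (intro continuous_intros bounded_linear.continuous_on[OF blL])
      show "norm (L (t *\<^sub>R z)) = \<bar>t\<bar> * norm (L z)" for t z
        using linear_scale[OF linL] by simp
      show "0 < norm (L z)" if "z \<noteq> 0" for z using inj0[of z] that by auto
    qed auto
    then show ?thesis using that by auto
  qed
  define g where "g = inv L"
  have Lg: "L (g x) = x" for x unfolding g_def using surjL by (simp add: surj_f_inv_f)
  have gL: "g (L v) = v" for v unfolding g_def using injL by simp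
  have blg: "bounded_linear g"
  proof (rule bounded_linear_intro[where K="inverse k"])
    fix a b show "g (a + b) = g a + g b"
      by (metis Lg gL linear_add[OF linL])
  next
    fix r a show "g (r *\<^sub>R a) = r *\<^sub>R g a"
      by (metis Lg gL linear_scale[OF linL])
  next
    fix a
    have "k * norm (g a) \<le> norm a" using k(2)[of "g a"] Lg by simp
    then show "norm (g a) \<le> norm a * inverse k" using k(1) by (simp add: field_simps)
  qed
  define C1 where "C1 = Blinfun (\<lambda>x. fst (g x))"
  define C2 where "C2 = Blinfun (\<lambda>x. snd (g x))"
  have C1: "blinfun_apply C1 x = fst (g x)" for x
    unfolding C1_def by (simp add: bounded_linear_Blinfun_apply bounded_linear_compose[OF bounded_linear_fst blg])
  have C2: "blinfun_apply C2 x = snd (g x)" for x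
    unfolding C2_def by (simp add: bounded_linear_Blinfun_apply bounded_linear_compose[OF bounded_linear_snd blg])
  show ?thesis
  proof (rule that[of C1 b1 C2 b2])
    fix x show "x = blinfun_apply C1 x *\<^sub>R b1 + blinfun_apply C2 x *\<^sub>R b2"
      using Lg[of x] by (simp add: C1 C2 L_def)
  qed
qed


theorem mainTheorem9:
  assumes "dim (UNIV :: 'a::banach set) = 2"
  shows "Lpp_nu TYPE('a)"
proof -
  obtain b1 b2 :: 'a and C1 C2 :: "'a \<Rightarrow>\<^sub>L real"
    where dec: "\<And>x. x = blinfun_apply C1 x *\<^sub>R b1 + blinfun_apply C2 x *\<^sub>R b2"
    by (rule coords2[OF assms]) (rule that)
  define \<Phi> :: "(real \<times> real) \<times> (real \<times> real) \<Rightarrow> ('a \<Rightarrow>\<^sub>L 'a)" where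
    "\<Phi> M = fst (fst M) *\<^sub>R rk C1 b1 + snd (fst M) *\<^sub>R rk C2 b1
          + fst (snd M) *\<^sub>R rk C1 b2 + snd (snd M) *\<^sub>R rk C2 b2" for M
  have lin: "linear \<Phi>" unfolding \<Phi>_def by (intro linearI) (auto simp: algebra_simps)
  have bl: "bounded_linear \<Phi>" using lin linear_conv_bounded_linear by blast
  have su: "surj \<Phi>"
  proof -
    have "T \<in> range \<Phi>" for T :: "'a \<Rightarrow>\<^sub>L 'a"
    proof -
      define M where "M = ((blinfun_apply C1 (blinfun_apply T b1), blinfun_apply C1 (blinfun_apply T b2)),
                          (blinfun_apply C2 (blinfun_apply T b1), blinfun_apply C2 (blinfun_apply T b2)))"
      have "\<Phi> M = T"
      proof (rule blinfun_eqI)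
        fix x
        have Tx: "blinfun_apply T x = blinfun_apply C1 x *\<^sub>R blinfun_apply T b1 + blinfun_apply C2 x *\<^sub>R blinfun_apply T b2"
          proof -
          have "blinfun_apply T x = blinfun_apply T (blinfun_apply C1 x *\<^sub>R b1 + blinfun_apply C2 x *\<^sub>R b2)"
            by (rule arg_cong[where f="blinfun_apply T", OF dec[of x]])
          then show ?thesis by (simp add: blinfun.add_right blinfun.scaleR_right)
        qed
        have PM: "blinfun_apply (\<Phi> M) x =
            (blinfun_apply C1 (blinfun_apply T b1) * blinfun_apply C1 x) *\<^sub>R b1
          + (blinfun_apply C1 (blinfun_apply T b2) * blinfun_apply C2 x) *\<^sub>R b1
          + (blinfun_apply C2 (blinfun_apply T b1) * blinfun_apply C1 x) *\<^sub>R b2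
          + (blinfun_apply C2 (blinfun_apply T b2) * blinfun_apply C2 x) *\<^sub>R b2"
          by (simp add: \<Phi>_def M_def rk_apply blinfun.add_left blinfun.scaleR_left)
        have gen: "(a11 * c1) *\<^sub>R b1 + (a12 * c2) *\<^sub>R b1 + (a21 * c1) *\<^sub>R b2 + (a22 * c2) *\<^sub>R b2
            = c1 *\<^sub>R y1 + c2 *\<^sub>R y2"
          if "y1 = a11 *\<^sub>R b1 + a21 *\<^sub>R b2" "y2 = a12 *\<^sub>R b1 + a22 *\<^sub>R b2"
          for a11 a12 a21 a22 c1 c2 :: real and y1 y2 :: 'a
          using that by (simp add: scaleR_add_right algebra_simps)
        show "blinfun_apply (\<Phi> M) x = blinfun_apply T x"
          unfolding Tx PM by (rule gen) (rule dec)+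
      qed
      then show ?thesis by (metis rangeI)
    qed
    then show ?thesis by blast
  qed
  show ?thesis
    unfolding Lpp_nu_def
  proof (intro allI impI)
    fix \<epsilon> :: real and x :: 'a and f :: "'a \<Rightarrow>\<^sub>L real"
    assume "\<epsilon> > 0" "(x, f) \<in> state_pairs"
    then show "\<exists>\<eta>>0. \<forall>T :: 'a \<Rightarrow>\<^sub>L 'a.
         numrad T = 1 \<and> \<bar>blinfun_apply f (blinfun_apply T x)\<bar> > 1 - \<eta> \<longrightarrow>
         (\<exists>S :: 'a \<Rightarrow>\<^sub>L 'a. numrad S = 1 \<and> \<bar>blinfun_apply f (blinfun_apply S x)\<bar> = 1
              \<and> norm (S - T) < \<epsilon>)"
      using core[OF bl su] by blast
  qed
qed

end
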